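(* Let $G$ and $H$ be connected graphs of order at least two such that neither $G$ nor $H$ is a complete graph. Suppose $\textnormal{diam}(G\diamond H)=3$, neither $G$ nor $H$ has a pair of distinct adjacent twins, $G$ has neither a universal vertex nor a $\gamma_G$-pair, and $H$ has a $\gamma_H$-pair. (a) If $V(H)\setminus\mathbb{P}(H)=\{h^*\}$ for a single vertex $h^*$, then $(G\diamond H)_{\rm SR}\cong \overline{G}\cup\frac{|V(G)|(|V(H)|-1)}{2}K_2$. (b) If $V(H)=\mathbb{P}(H)$, then $(G\diamond H)_{\rm SR}\cong\frac{|V(G)||V(H)|}{2}K_2$.
   Context: All graphs are finite, simple and undirected; $d(x,y)$ is the shortest-path distance; $\overline{X}$ denotes the complement of $X$; $kK_2$ is the disjoint union of $k$ copies of $K_2$ and $\cup$ denotes disjoint union; $N_X[x]=N_X(x)\cup\{x\}$. A universal vertex of $X$ is a vertex adjacent to all other vertices. Distinct vertices $u,w$ are adjacent twins if $N[u]=N[w]$. A set $D$ is a dominating set of $X$ if $\bigcup_{x\in D}N[x]=V(X)$. A pair $\{u,w\}$ is a $\gamma_X$-pair if $\{u,w\}$ is a minimum dominating set of $X$ with $N_X[u]\cap N_X[w]=\emptyset$ and $N_X[u]\cup N_X[w]=V(X)$; $\mathbb{P}(X)$ is the set of vertices of $X$ belonging to some $\gamma_X$-pair. The modular product $G\diamond H$ has vertex set $V(G)\times V(H)$, and $(g,h)$, $(g',h')$ are adjacent iff one of the following holds: ($g=g'$ and $hh'\in E(H)$), or ($h=h'$ and $gg'\in E(G)$), or ($gg'\in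 E(G)$ and $hh'\in E(H)$), or ($gg'\in E(\overline{G})$ and $hh'\in E(\overline{H})$). A vertex $u$ is maximally distant from $v$ if $d(u,v)\ge d(w,v)$ for every neighbor $w$ of $u$; $u,v$ are mutually maximally distant (MMD) if each is maximally distant from the other. For a connected graph $X$, the strong resolving graph $X_{\rm SR}$ has vertex set $\{x\in V(X): x\text{ is MMD with some }y\}$ and edges exactly the MMD pairs of $X$. *)

theory Defs
  imports Main
begin

definition graph :: "'a set \<Rightarrow> ('a \<Rightarrow> 'a \<Rightarrow> bool) \<Rightarrow> bool" where
  "graph V E \<longleftrightarrow> finite V \<and> (\<forall>x y. E x y \<longrightarrow> x \<in> V \<and> y \<in> V)
     \<and> (\<forall>x y. E x y \<longrightarrow> E y x) \<and> (\<forall>x. \<not> E x x)"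

fun walkn :: "'a set \<Rightarrow> ('a \<Rightarrow> 'a \<Rightarrow> bool) \<Rightarrow> nat \<Rightarrow> 'a \<Rightarrow> 'a \<Rightarrow> bool" where
  "walkn V E 0 u v = (u = v \<and> u \<in> V)"
| "walkn V E (Suc n) u v = (u \<in> V \<and> (\<exists>w. w \<in> V \<and> E u w \<and> walkn V E n w v))"

definition connected :: "'a set \<Rightarrow> ('a \<Rightarrow> 'a \<Rightarrow> bool) \<Rightarrow> bool" where
  "connected V E \<longleftrightarrow> V \<noteq> {} \<and> (\<forall>u\<in>V. \<forall>v\<in>V. \<exists>n. walkn V E n u v)"

definition dist :: "'a set \<Rightarrow> ('a \<Rightarrow> 'a \<Rightarrow> bool) \<Rightarrow> 'a \<Rightarrow> 'a \<Rightarrow> nat" where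
  "dist V E u v = (LEAST n. walkn V E n u v)"

definition diam :: "'a set \<Rightarrow> ('a \<Rightarrow> 'a \<Rightarrow> bool) \<Rightarrow> nat" where
  "diam V E = Max {dist V E u v | u v. u \<in> V \<and> v \<in> V}"

definition complete_graph :: "'a set \<Rightarrow> ('a \<Rightarrow> 'a \<Rightarrow> bool) \<Rightarrow> bool" where
  "complete_graph V E \<longleftrightarrow> (\<forall>u\<in>V. \<forall>v\<in>V. u \<noteq> v \<longrightarrow> E u v)"

definition compl_edges :: "'a set \<Rightarrow> ('a \<Rightarrow> 'a \<Rightarrow> bool) \<Rightarrow> 'a \<Rightarrow> 'a \<Rightarrow> bool" where
  "compl_edges V E x y \<longleftrightarrow> x \<in> V \<and> y \<in> V \<and> x \<noteq> y \<and> \<not> E x y"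

definition cnbhd :: "'a set \<Rightarrow> ('a \<Rightarrow> 'a \<Rightarrow> bool) \<Rightarrow> 'a \<Rightarrow> 'a set" where
  "cnbhd V E x = {y \<in> V. E x y} \<union> {x}"

definition universal_vertex :: "'a set \<Rightarrow> ('a \<Rightarrow> 'a \<Rightarrow> bool) \<Rightarrow> 'a \<Rightarrow> bool" where
  "universal_vertex V E x \<longleftrightarrow> x \<in> V \<and> (\<forall>y\<in>V. y \<noteq> x \<longrightarrow> E x y)"

definition adjacent_twins :: "'a set \<Rightarrow> ('a \<Rightarrow> 'a \<Rightarrow> bool) \<Rightarrow> 'a \<Rightarrow> 'a \<Rightarrow> bool" where
  "adjacent_twins V E u w \<longleftrightarrow> u \<in> V \<and> w \<in> V \<and> u \<noteq> w \<and> cnbhd V E u = cnbhd V E w"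

definition dominating :: "'a set \<Rightarrow> ('a \<Rightarrow> 'a \<Rightarrow> bool) \<Rightarrow> 'a set \<Rightarrow> bool" where
  "dominating V E D \<longleftrightarrow> D \<subseteq> V \<and> (\<Union>x\<in>D. cnbhd V E x) = V"

definition min_dominating :: "'a set \<Rightarrow> ('a \<Rightarrow> 'a \<Rightarrow> bool) \<Rightarrow> 'a set \<Rightarrow> bool" where
  "min_dominating V E D \<longleftrightarrow> dominating V E D \<and>
     (\<forall>D'. dominating V E D' \<longrightarrow> card D \<le> card D')"

definition gamma_pair :: "'a set \<Rightarrow> ('a \<Rightarrow> 'a \<Rightarrow> bool) \<Rightarrow> 'a \<Rightarrow> 'a \<Rightarrow> bool" where
  "gamma_pair V E u w \<longleftrightarrow> min_dominating V E {u, w}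
     \<and> cnbhd V E u \<inter> cnbhd V E w = {} \<and> cnbhd V E u \<union> cnbhd V E w = V"

definition PP :: "'a set \<Rightarrow> ('a \<Rightarrow> 'a \<Rightarrow> bool) \<Rightarrow> 'a set" where
  "PP V E = {x. \<exists>y. gamma_pair V E x y \<or> gamma_pair V E y x}"

definition modprod_edges ::
  "'a set \<Rightarrow> ('a \<Rightarrow> 'a \<Rightarrow> bool) \<Rightarrow> 'b set \<Rightarrow> ('b \<Rightarrow> 'b \<Rightarrow> bool) \<Rightarrow> 'a \<times> 'b \<Rightarrow> 'a \<times> 'b \<Rightarrow> bool" where
  "modprod_edges VG EG VH EH p q \<longleftrightarrow> p \<in> VG \<times> VH \<and> q \<in> VG \<times> VH \<and>
     ((fst p = fst q \<and> EH (snd p) (snd q)) \<or>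
      (snd p = snd q \<and> EG (fst p) (fst q)) \<or>
      (EG (fst p) (fst q) \<and> EH (snd p) (snd q)) \<or>
      (compl_edges VG EG (fst p) (fst q) \<and> compl_edges VH EH (snd p) (snd q)))"

definition max_distant :: "'a set \<Rightarrow> ('a \<Rightarrow> 'a \<Rightarrow> bool) \<Rightarrow> 'a \<Rightarrow> 'a \<Rightarrow> bool" where
  "max_distant V E u v \<longleftrightarrow> (\<forall>w\<in>V. E u w \<longrightarrow> dist V E w v \<le> dist V E u v)"

definition MMD :: "'a set \<Rightarrow> ('a \<Rightarrow> 'a \<Rightarrow> bool) \<Rightarrow> 'a \<Rightarrow> 'a \<Rightarrow> bool" where
  "MMD V E u v \<longleftrightarrow> u \<in> V \<and> v \<in> V \<and> u \<noteq> v \<and> max_distant V E u v \<and> max_distant V E v u"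

definition SR_verts :: "'a set \<Rightarrow> ('a \<Rightarrow> 'a \<Rightarrow> bool) \<Rightarrow> 'a set" where
  "SR_verts V E = {x \<in> V. \<exists>y. MMD V E x y}"

definition SR_edges :: "'a set \<Rightarrow> ('a \<Rightarrow> 'a \<Rightarrow> bool) \<Rightarrow> 'a \<Rightarrow> 'a \<Rightarrow> bool" where
  "SR_edges V E = MMD V E"

definition graph_iso :: "'a set \<Rightarrow> ('a \<Rightarrow> 'a \<Rightarrow> bool) \<Rightarrow> 'b set \<Rightarrow> ('b \<Rightarrow> 'b \<Rightarrow> bool) \<Rightarrow> bool" where
  "graph_iso V1 E1 V2 E2 \<longleftrightarrow> (\<exists>f. bij_betw f V1 V2 \<and>
     (\<forall>x\<in>V1. \<forall>y\<in>V1. E1 x y \<longleftrightarrow> E2 (f x) (f y)))"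

definition kK2_verts :: "nat \<Rightarrow> (nat \<times> bool) set" where
  "kK2_verts k = {..<k} \<times> UNIV"

definition kK2_edges :: "nat \<Rightarrow> nat \<times> bool \<Rightarrow> nat \<times> bool \<Rightarrow> bool" where
  "kK2_edges k p q \<longleftrightarrow> fst p < k \<and> fst p = fst q \<and> snd p \<noteq> snd q"

definition du_verts :: "'a set \<Rightarrow> 'b set \<Rightarrow> ('a + 'b) set" where
  "du_verts V1 V2 = Inl ` V1 \<union> Inr ` V2"

fun du_edges :: "('a \<Rightarrow> 'a \<Rightarrow> bool) \<Rightarrow> ('b \<Rightarrow> 'b \<Rightarrow> bool) \<Rightarrow> 'a + 'b \<Rightarrow> 'a + 'b \<Rightarrow> bool" where
  "du_edges E1 E2 (Inl x) (Inl y) = E1 x y"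
| "du_edges E1 E2 (Inr x) (Inr y) = E2 x y"
| "du_edges E1 E2 _ _ = False"

end

theory Submission
  imports Defs
begin

lemma walkn0[simp]: "walkn V E 0 u v \<longleftrightarrow> u = v \<and> u \<in> V" by simp

lemma dist_le: "walkn V E n u v \<Longrightarrow> dist V E u v \<le> n"
  unfolding dist_def by (rule Least_le)

lemma dist_walk: "walkn V E n u v \<Longrightarrow> walkn V E (dist V E u v) u v"
  unfolding dist_def by (rule LeastI)

lemma walk1: "graph V E \<Longrightarrow> E u v \<Longrightarrow> walkn V E 1 u v"
  unfolding graph_def by auto

lemma walk1_iff: "graph V E \<Longrightarrow> walkn V E 1 u v \<longleftrightarrow> E u v"
  unfolding graph_def by auto

lemma walk_cons: "graph V E \<Longrightarrow> E u w \<Longrightarrow> walkn V E n w v \<Longrightarrow> walkn V E (Suc n) u v"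
  unfolding graph_def by auto

lemma walk2_iff: "graph V E \<Longrightarrow> walkn V E 2 u v \<longleftrightarrow> (\<exists>w. E u w \<and> E w v)"
  unfolding graph_def numeral_2_eq_2 by auto

definition sep :: "'a set \<Rightarrow> ('a \<Rightarrow> 'a \<Rightarrow> bool) \<Rightarrow> 'a \<Rightarrow> 'a \<Rightarrow> bool" where
  "sep V E a b \<longleftrightarrow> a \<in> V \<and> b \<in> V \<and> a \<noteq> b \<and> cnbhd V E a \<inter> cnbhd V E b = {}
     \<and> cnbhd V E a \<union> cnbhd V E b = V"

lemma cnbhd_mem: "y \<in> cnbhd V E x \<longleftrightarrow> (y \<in> V \<and> E x y) \<or> y = x"
  unfolding cnbhd_def by auto

lemma sep_sym: "sep V E a b \<Longrightarrow> sep V E b a"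
  unfolding sep_def by auto

lemma sep_nadj: "graph V E \<Longrightarrow> sep V E a b \<Longrightarrow> \<not> E a b"
  unfolding sep_def graph_def cnbhd_def by auto

lemma sep_part: "graph V E \<Longrightarrow> sep V E a b \<Longrightarrow> y \<in> V \<Longrightarrow>
   ((E a y \<or> y = a) \<longleftrightarrow> \<not> (E b y \<or> y = b))"
  unfolding sep_def graph_def cnbhd_def by blast

lemma sep_unique:
  assumes "graph V E" "\<not> (\<exists>u w. adjacent_twins V E u w)" "sep V E a b" "sep V E a c"
  shows "b = c"
proof (rule ccontr)
  assume "b \<noteq> c"
  have "cnbhd V E b = cnbhd V E c"
    using assms(3,4) unfolding sep_def by blast
  moreover have "b \<in> V" "c \<in> V" using assms(3,4) unfolding sep_def by auto
  ultimately show False using assms(2) \<open>b \<noteq> c\<close> unfolding adjacent_twins_def by blast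
qed

lemma twin_adj:
  assumes "graph V E" "\<not> (\<exists>u w. adjacent_twins V E u w)" "E a b"
  shows "(\<exists>y\<in>V. E a y \<and> y \<noteq> b \<and> \<not> E b y) \<or> (\<exists>y\<in>V. E b y \<and> y \<noteq> a \<and> \<not> E a y)"
proof -
  have ab: "a \<in> V" "b \<in> V" "a \<noteq> b" "E b a" using assms(1,3) unfolding graph_def by auto
  then have "cnbhd V E a \<noteq> cnbhd V E b" using assms(2) unfolding adjacent_twins_def by blast
  then show ?thesis using ab assms(3) unfolding cnbhd_def by auto
qed

lemma nonsep_cases:
  assumes "graph V E" "\<not> sep V E a b" "a \<in> V" "b \<in> V" "a \<noteq> b" "\<not> E a b"
  shows "(\<exists>x\<in>V. E a x \<and> E x b) \<or> (\<exists>x\<in>V. x \<noteq> a \<and> x \<noteq> b \<and> \<not> E a x \<and> \<not> E x b)"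
proof -
  have "cnbhd V E a \<inter> cnbhd V E b \<noteq> {} \<or> cnbhd V E a \<union> cnbhd V E b \<noteq> V"
    using assms unfolding sep_def by blast
  then show ?thesis using assms(1,3,4,5,6) unfolding cnbhd_def graph_def by blast
qed

lemma gamma_pair_sep:
  assumes "graph V E" "\<not> (\<exists>x. universal_vertex V E x)"
  shows "gamma_pair V E a b \<longleftrightarrow> sep V E a b"
proof
  assume g: "gamma_pair V E a b"
  then have "a \<noteq> b" unfolding gamma_pair_def cnbhd_def by auto
  moreover have "{a, b} \<subseteq> V" using g unfolding gamma_pair_def min_dominating_def dominating_def by blast
  ultimately show "sep V E a b" using g unfolding gamma_pair_def sep_def by blast
next
  assume s: "sep V E a b"
  have ab: "a \<in> V" "b \<in> V" "a \<noteq> b" using s unfolding sep_def by auto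
  have dom: "dominating V E {a, b}" using s ab unfolding dominating_def sep_def by simp
  have "card {a, b} \<le> card D'" if "dominating V E D'" for D'
  proof -
    have sub: "D' \<subseteq> V" and un: "(\<Union>x\<in>D'. cnbhd V E x) = V" using that unfolding dominating_def by auto
    have fin: "finite D'" using sub assms(1) unfolding graph_def using finite_subset by blast
    have ne: "D' \<noteq> {}" using un ab by auto
    have ns: "card D' \<noteq> 1"
    proof
      assume "card D' = 1"
      then obtain x where x: "D' = {x}" by (auto simp: card_1_singleton_iff)
      then have "cnbhd V E x = V" "x \<in> V" using un sub by auto
      then have "universal_vertex V E x" unfolding universal_vertex_def cnbhd_def by auto
      then show False using assms(2) by blast
    qed
    have "card D' \<noteq> 0" using fin ne by simp
    then have "card D' \<ge> 2" using ns by linarith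
    then show ?thesis using ab by simp
  qed
  then show "gamma_pair V E a b" using dom s unfolding gamma_pair_def min_dominating_def sep_def by blast
qed


locale mp =
  fixes VG :: "'a set" and EG :: "'a \<Rightarrow> 'a \<Rightarrow> bool"
    and VH :: "'b set" and EH :: "'b \<Rightarrow> 'b \<Rightarrow> bool"
  assumes gG: "graph VG EG" and gH: "graph VH EH"
    and cG: "connected VG EG" and cardG: "card VG \<ge> 2"
    and twG: "\<not> (\<exists>u w. adjacent_twins VG EG u w)"
    and twH: "\<not> (\<exists>u w. adjacent_twins VH EH u w)"
    and uG: "\<not> (\<exists>x. universal_vertex VG EG x)"
    and uH: "\<not> (\<exists>x. universal_vertex VH EH x)"
    and sG: "\<not> (\<exists>a b. sep VG EG a b)"
begin

abbreviation "PV \<equiv> VG \<times> VH"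
abbreviation "PE \<equiv> modprod_edges VG EG VH EH"

definition grel :: "'a \<times> 'b \<Rightarrow> 'a \<times> 'b \<Rightarrow> bool" where
  "grel u v \<longleftrightarrow> fst u = fst v \<and> sep VH EH (snd u) (snd v)"

lemma symG: "EG x y \<Longrightarrow> EG y x" using gG unfolding graph_def by blast
lemma symH: "EH x y \<Longrightarrow> EH y x" using gH unfolding graph_def by blast
lemma irG: "\<not> EG x x" using gG unfolding graph_def by blast
lemma irH: "\<not> EH x x" using gH unfolding graph_def by blast
lemma inG: "EG x y \<Longrightarrow> x \<in> VG \<and> y \<in> VG" using gG unfolding graph_def by blast
lemma inH: "EH x y \<Longrightarrow> x \<in> VH \<and> y \<in> VH" using gH unfolding graph_def by blast

lemma PE_iff: "PE (g,h) (g',h') \<longleftrightarrow> g \<in> VG \<and> h \<in> VH \<and> g' \<in> VG \<and> h' \<in> VH \<and>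
   ((g = g' \<and> EH h h') \<or> (h = h' \<and> EG g g') \<or> (EG g g' \<and> EH h h') \<or>
    (g \<noteq> g' \<and> \<not> EG g g' \<and> h \<noteq> h' \<and> \<not> EH h h'))"
  by (auto simp: modprod_edges_def compl_edges_def)

lemma graphP: "graph PV PE"
proof -
  have "finite PV" using gG gH unfolding graph_def by simp
  moreover have "PE p q \<Longrightarrow> p \<in> PV \<and> q \<in> PV" for p q by (auto simp: modprod_edges_def)
  moreover have "PE p q \<Longrightarrow> PE q p" for p q
    by (cases p; cases q) (auto simp: PE_iff dest: symG symH)
  moreover have "\<not> PE p p" for p by (cases p) (auto simp: PE_iff irG irH)
  ultimately show ?thesis unfolding graph_def by blast
qed

lemma symP: "PE p q \<Longrightarrow> PE q p" using graphP unfolding graph_def by blast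
lemma irP: "\<not> PE p p" using graphP unfolding graph_def by blast

lemma nonuniv_G: "g \<in> VG \<Longrightarrow> \<exists>x\<in>VG. x \<noteq> g \<and> \<not> EG g x"
  using uG unfolding universal_vertex_def by blast
lemma nonuniv_H: "h \<in> VH \<Longrightarrow> \<exists>y\<in>VH. y \<noteq> h \<and> \<not> EH h y"
  using uH unfolding universal_vertex_def by blast

lemma nbr_G: assumes "g \<in> VG" shows "\<exists>x. EG g x"
proof -
  have "VG - {g} \<noteq> {}"
  proof
    assume "VG - {g} = {}"
    then have "VG \<subseteq> {g}" by blast
    then have "card VG \<le> 1" using card_mono[of "{g}" VG] by simp
    then show False using cardG by simp
  qed
  then obtain g' where g': "g' \<in> VG" "g' \<noteq> g" by blast
  then obtain n where "walkn VG EG n g g'" using cG assms unfolding connected_def by blast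
  then show ?thesis using g' by (cases n) auto
qed

lemma common:
  assumes "(g,h) \<in> PV" "(g',h') \<in> PV" "(g,h) \<noteq> (g',h')" "\<not> PE (g,h) (g',h')"
    "\<not> grel (g,h) (g',h')"
  shows "\<exists>w. PE (g,h) w \<and> PE w (g',h')"
proof (cases "g = g'")
  case True
  then have hh: "h \<noteq> h'" "\<not> EH h h'" using assms by (auto simp: PE_iff)
  have ns: "\<not> sep VH EH h h'" using assms True by (simp add: grel_def)
  have "h \<in> VH" "h' \<in> VH" using assms by auto
  from nonsep_cases[OF gH ns this hh] show ?thesis
  proof
    assume "\<exists>y\<in>VH. EH h y \<and> EH y h'"
    then obtain y where "y \<in> VH" "EH h y" "EH y h'" by blast
    then show ?thesis using assms True by (intro exI[of _ "(g,y)"]) (auto simp: PE_iff)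
  next
    assume "\<exists>y\<in>VH. y \<noteq> h \<and> y \<noteq> h' \<and> \<not> EH h y \<and> \<not> EH y h'"
    then obtain y where y: "y \<in> VH" "y \<noteq> h" "y \<noteq> h'" "\<not> EH h y" "\<not> EH y h'" by blast
    obtain x where x: "x \<in> VG" "x \<noteq> g" "\<not> EG g x" using nonuniv_G assms by auto
    have "\<not> EG x g" using x symG by blast
    then show ?thesis using assms True x y by (intro exI[of _ "(x,y)"]) (auto simp: PE_iff)
  qed
next
  case False
  show ?thesis
  proof (cases "h = h'")
    case True
    then have ng: "\<not> EG g g'" using assms False by (auto simp: PE_iff)
    have ns: "\<not> sep VG EG g g'" using sG by blast
    have "g \<in> VG" "g' \<in> VG" using assms by auto
    from nonsep_cases[OF gG ns this False ng] show ?thesis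
    proof
      assume "\<exists>x\<in>VG. EG g x \<and> EG x g'"
      then obtain x where "x \<in> VG" "EG g x" "EG x g'" by blast
      then show ?thesis using assms True by (intro exI[of _ "(x,h)"]) (auto simp: PE_iff)
    next
      assume "\<exists>x\<in>VG. x \<noteq> g \<and> x \<noteq> g' \<and> \<not> EG g x \<and> \<not> EG x g'"
      then obtain x where x: "x \<in> VG" "x \<noteq> g" "x \<noteq> g'" "\<not> EG g x" "\<not> EG x g'" by blast
      obtain y where y: "y \<in> VH" "y \<noteq> h" "\<not> EH h y" using nonuniv_H assms by auto
      have "\<not> EH y h" using y symH by blast
      then show ?thesis using assms True x y by (intro exI[of _ "(x,y)"]) (auto simp: PE_iff)
    qed
  next
    case hne: False
    have c: "(EG g g' \<and> \<not> EH h h') \<or> (\<not> EG g g' \<and> EH h h')"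
      using assms False hne by (auto simp: PE_iff)
    then show ?thesis
    proof
      assume a: "EG g g' \<and> \<not> EH h h'"
      from twin_adj[OF gG twG] a have
        "(\<exists>y\<in>VG. EG g y \<and> y \<noteq> g' \<and> \<not> EG g' y) \<or> (\<exists>y\<in>VG. EG g' y \<and> y \<noteq> g \<and> \<not> EG g y)"
        by blast
      then show ?thesis
      proof
        assume "\<exists>y\<in>VG. EG g y \<and> y \<noteq> g' \<and> \<not> EG g' y"
        then obtain x where x: "x \<in> VG" "EG g x" "x \<noteq> g'" "\<not> EG g' x" by blast
        have "\<not> EG x g'" using x symG by blast
        then show ?thesis using assms a hne x by (intro exI[of _ "(x,h)"]) (auto simp: PE_iff)
      next
        assume "\<exists>y\<in>VG. EG g' y \<and> y \<noteq> g \<and> \<not> EG g y"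
        then obtain x where x: "x \<in> VG" "EG g' x" "x \<noteq> g" "\<not> EG g x" by blast
        have "EG x g'" using x symG by blast
        then show ?thesis using assms a hne x by (intro exI[of _ "(x,h')"]) (auto simp: PE_iff)
      qed
    next
      assume a: "\<not> EG g g' \<and> EH h h'"
      from twin_adj[OF gH twH] a have
        "(\<exists>y\<in>VH. EH h y \<and> y \<noteq> h' \<and> \<not> EH h' y) \<or> (\<exists>y\<in>VH. EH h' y \<and> y \<noteq> h \<and> \<not> EH h y)"
        by blast
      then show ?thesis
      proof
        assume "\<exists>y\<in>VH. EH h y \<and> y \<noteq> h' \<and> \<not> EH h' y"
        then obtain y where y: "y \<in> VH" "EH h y" "y \<noteq> h'" "\<not> EH h' y" by blast
        have "\<not> EH y h'" using y symH by blast
        then show ?thesis using assms a False y by (intro exI[of _ "(g,y)"]) (auto simp: PE_iff)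
      next
        assume "\<exists>y\<in>VH. EH h' y \<and> y \<noteq> h \<and> \<not> EH h y"
        then obtain y where y: "y \<in> VH" "EH h' y" "y \<noteq> h" "\<not> EH h y" by blast
        have "EH y h'" using y symH by blast
        then show ?thesis using assms a False y by (intro exI[of _ "(g',y)"]) (auto simp: PE_iff)
      qed
    qed
  qed
qed


lemma grel_no:
  assumes "grel u v"
  shows "u \<noteq> v" "\<not> PE u v" "\<not> (\<exists>w. PE u w \<and> PE w v)"
proof -
  obtain g h g' h' where uv: "u = (g,h)" "v = (g',h')" by (cases u, cases v) auto
  have gg: "g' = g" and s: "sep VH EH h h'" using assms uv by (auto simp: grel_def)
  have hh: "h \<noteq> h'" "\<not> EH h h'" "\<not> EH h' h"
    using s sep_nadj[OF gH s] sep_nadj[OF gH sep_sym[OF s]] unfolding sep_def by simp_all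
  show "u \<noteq> v" using uv hh by auto
  show "\<not> PE u v" using uv gg hh irG by (auto simp: PE_iff)
  show "\<not> (\<exists>w. PE u w \<and> PE w v)"
  proof
    assume "\<exists>w. PE u w \<and> PE w v"
    then obtain x y where w: "PE (g,h) (x,y)" "PE (x,y) (g,h')" using uv gg by auto
    then have "y \<in> VH" by (auto simp: PE_iff)
    from sep_part[OF gH s this] have sp: "(EH h y \<or> y = h) \<longleftrightarrow> \<not> (EH h' y \<or> y = h')" .
    have e1: "EG x g = EG g x" using symG by blast
    have e2: "EH y h' = EH h' y" using symH by blast
    show False using w sp by (auto simp: PE_iff e1 e2 irG)
  qed
qed

lemma walk3: assumes "u \<in> PV" "v \<in> PV" shows "\<exists>n\<le>3. walkn PV PE n u v"
proof -
  consider "u = v" | "PE u v" | "u \<noteq> v" "\<not> PE u v" "\<not> grel u v" | "grel u v" by blast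
  then show ?thesis
  proof cases
    case 1 then show ?thesis using assms by (intro exI[of _ 0]) auto
  next
    case 2 then show ?thesis using walk1[OF graphP] by (intro exI[of _ 1]) auto
  next
    case 3
    then obtain w where "PE u w" "PE w v" using common[of "fst u" "snd u" "fst v" "snd v"] assms by auto
    then have "walkn PV PE 2 u v" using walk2_iff[OF graphP] by blast
    then show ?thesis by (intro exI[of _ 2]) auto
  next
    case 4
    obtain g h h' where uv: "u = (g,h)" "v = (g,h')" using 4 by (cases u, cases v) (auto simp: grel_def)
    obtain x where x: "EG g x" using nbr_G assms uv by auto
    have xg: "x \<noteq> g" using x irG by auto
    have w: "PE u (x,h)" using x assms uv inG by (auto simp: PE_iff)
    have wv: "(x,h) \<in> PV" "(x,h) \<noteq> v" using x inG assms uv xg by auto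
    show ?thesis
    proof (cases "PE (x,h) v")
      case True
      then have "walkn PV PE 2 u v" using w walk2_iff[OF graphP] by blast
      then show ?thesis by (intro exI[of _ 2]) auto
    next
      case False
      have "\<not> grel (x,h) v" using uv xg by (simp add: grel_def)
      then obtain w' where "PE (x,h) w'" "PE w' v"
        using common[of x h g h'] wv False assms uv by auto
      then have "walkn PV PE 2 (x,h) v" using walk2_iff[OF graphP] by blast
      then have "walkn PV PE (Suc 2) u v" using walk_cons[OF graphP w] by blast
      then have "walkn PV PE 3 u v" by (simp add: numeral_3_eq_3)
      then show ?thesis by (intro exI[of _ 3]) auto
    qed
  qed
qed

lemma dw: assumes "u \<in> PV" "v \<in> PV"
  shows "walkn PV PE (dist PV PE u v) u v" "dist PV PE u v \<le> 3"
proof -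
  obtain n where n: "n \<le> 3" "walkn PV PE n u v" using walk3[OF assms] by blast
  show "walkn PV PE (dist PV PE u v) u v" using dist_walk[OF n(2)] .
  show "dist PV PE u v \<le> 3" using dist_le[OF n(2)] n(1) by linarith
qed

lemma dist_ge2: assumes "u \<in> PV" "v \<in> PV" "u \<noteq> v" "\<not> PE u v" shows "2 \<le> dist PV PE u v"
proof -
  have w: "walkn PV PE (dist PV PE u v) u v" using dw(1)[OF assms(1,2)] .
  have "dist PV PE u v \<noteq> 0"
  proof
    assume a: "dist PV PE u v = 0" have "walkn PV PE 0 u v" using w(1) unfolding a .
    then show False using assms by simp
  qed
  moreover have "dist PV PE u v \<noteq> 1"
  proof
    assume a: "dist PV PE u v = 1" have "walkn PV PE 1 u v" using w(1) unfolding a .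
    then show False using assms walk1_iff[OF graphP] by blast
  qed
  ultimately show ?thesis by linarith
qed

lemma dist_eq1: assumes "PE u v" shows "dist PV PE u v = 1"
proof -
  have "dist PV PE u v \<le> 1" using dist_le[OF walk1[OF graphP assms]] .
  moreover have "u \<in> PV" "v \<in> PV" using assms graphP unfolding graph_def by blast+
  moreover have "u \<noteq> v" using assms irP[of u] by blast
  ultimately have "dist PV PE u v \<noteq> 0"
    using dw(1)[of u v] by (metis walkn0)
  then show ?thesis using \<open>dist PV PE u v \<le> 1\<close> by linarith
qed

lemma dist_le2: assumes "u \<in> PV" "v \<in> PV" "\<not> grel u v" shows "dist PV PE u v \<le> 2"
proof -
  consider "u = v" | "PE u v" | "u \<noteq> v" "\<not> PE u v" by blast
  then show ?thesis
  proof cases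
    case 1 then show ?thesis using dist_le[of PV PE 0 u v] assms by auto
  next
    case 2 then show ?thesis using dist_eq1 by simp
  next
    case 3
    then obtain w where "PE u w" "PE w v" using common[of "fst u" "snd u" "fst v" "snd v"] assms by auto
    then have "walkn PV PE 2 u v" using walk2_iff[OF graphP] by blast
    then show ?thesis by (rule dist_le)
  qed
qed

lemma dist_eq3: assumes "u \<in> PV" "v \<in> PV" "grel u v" shows "dist PV PE u v = 3"
proof -
  note n = grel_no[OF assms(3)]
  have w: "walkn PV PE (dist PV PE u v) u v" "dist PV PE u v \<le> 3" using dw[OF assms(1,2)] by auto
  have "2 \<le> dist PV PE u v" using dist_ge2 assms n by blast
  moreover have "dist PV PE u v \<noteq> 2"
  proof
    assume a: "dist PV PE u v = 2" have "walkn PV PE 2 u v" using w(1) unfolding a .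
    then show False using n(3) walk2_iff[OF graphP] by blast
  qed
  ultimately show ?thesis using w(2) by linarith
qed


lemma adj_wit:
  assumes "PE u v"
  shows "(\<exists>w\<in>PV. PE u w \<and> w \<noteq> v \<and> \<not> PE w v) \<or> (\<exists>w\<in>PV. PE v w \<and> w \<noteq> u \<and> \<not> PE w u)"
proof -
  obtain g h g' h' where uv: "u = (g,h)" "v = (g',h')" by (cases u, cases v) auto
  have mem: "g \<in> VG" "h \<in> VH" "g' \<in> VG" "h' \<in> VH" using assms uv by (auto simp: PE_iff)
  have "(g = g' \<and> EH h h') \<or> (h = h' \<and> EG g g') \<or> (EG g g' \<and> EH h h') \<or>
    (g \<noteq> g' \<and> \<not> EG g g' \<and> h \<noteq> h' \<and> \<not> EH h h')" using assms uv by (simp add: PE_iff)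
  then consider (a) "g = g'" "EH h h'" | (b) "h = h'" "EG g g'" | (c) "EG g g'" "EH h h'"
    | (d) "g \<noteq> g'" "\<not> EG g g'" "h \<noteq> h'" "\<not> EH h h'" by blast
  then show ?thesis
  proof cases
    case a
    from twin_adj[OF gH twH a(2)] show ?thesis
    proof
      assume "\<exists>y\<in>VH. EH h y \<and> y \<noteq> h' \<and> \<not> EH h' y"
      then obtain y where y: "y \<in> VH" "EH h y" "y \<noteq> h'" "\<not> EH h' y" by blast
      have "\<not> EH y h'" using y symH by blast
      then have "PE u (g,y) \<and> (g,y) \<noteq> v \<and> \<not> PE (g,y) v" using y a uv mem irG by (auto simp: PE_iff)
      then show ?thesis using mem y by blast
    next
      assume "\<exists>y\<in>VH. EH h' y \<and> y \<noteq> h \<and> \<not> EH h y"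
      then obtain y where y: "y \<in> VH" "EH h' y" "y \<noteq> h" "\<not> EH h y" by blast
      have "\<not> EH y h" using y symH by blast
      then have "PE v (g,y) \<and> (g,y) \<noteq> u \<and> \<not> PE (g,y) u" using y a uv mem irG by (auto simp: PE_iff)
      then show ?thesis using mem y by blast
    qed
  next
    case b
    from twin_adj[OF gG twG b(2)] show ?thesis
    proof
      assume "\<exists>y\<in>VG. EG g y \<and> y \<noteq> g' \<and> \<not> EG g' y"
      then obtain x where x: "x \<in> VG" "EG g x" "x \<noteq> g'" "\<not> EG g' x" by blast
      have "\<not> EG x g'" using x symG by blast
      then have "PE u (x,h) \<and> (x,h) \<noteq> v \<and> \<not> PE (x,h) v" using x b uv mem irH by (auto simp: PE_iff)
      then show ?thesis using mem x by blast
    next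
      assume "\<exists>y\<in>VG. EG g' y \<and> y \<noteq> g \<and> \<not> EG g y"
      then obtain x where x: "x \<in> VG" "EG g' x" "x \<noteq> g" "\<not> EG g x" by blast
      have "\<not> EG x g" using x symG by blast
      then have "PE v (x,h) \<and> (x,h) \<noteq> u \<and> \<not> PE (x,h) u" using x b uv mem irH by (auto simp: PE_iff)
      then show ?thesis using mem x by blast
    qed
  next
    case c
    have hh: "h \<noteq> h'" "EH h' h" using c irH symH by auto
    from twin_adj[OF gG twG c(1)] show ?thesis
    proof
      assume "\<exists>y\<in>VG. EG g y \<and> y \<noteq> g' \<and> \<not> EG g' y"
      then obtain x where x: "x \<in> VG" "EG g x" "x \<noteq> g'" "\<not> EG g' x" by blast
      have "\<not> EG x g'" using x symG by blast
      then have "PE u (x,h) \<and> (x,h) \<noteq> v \<and> \<not> PE (x,h) v" using x c hh uv mem by (auto simp: PE_iff)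
      then show ?thesis using mem x by blast
    next
      assume "\<exists>y\<in>VG. EG g' y \<and> y \<noteq> g \<and> \<not> EG g y"
      then obtain x where x: "x \<in> VG" "EG g' x" "x \<noteq> g" "\<not> EG g x" by blast
      have "\<not> EG x g" using x symG by blast
      then have "PE v (x,h') \<and> (x,h') \<noteq> u \<and> \<not> PE (x,h') u" using x c hh uv mem by (auto simp: PE_iff)
      then show ?thesis using mem x by blast
    qed
  next
    case d
    have ns: "\<not> sep VG EG g g'" using sG by blast
    from nonsep_cases[OF gG ns mem(1,3) d(1,2)] show ?thesis
    proof
      assume "\<exists>x\<in>VG. EG g x \<and> EG x g'"
      then obtain x where x: "x \<in> VG" "EG g x" "EG x g'" by blast
      have "x \<noteq> g'" using x irG by auto
      then have "PE u (x,h) \<and> (x,h) \<noteq> v \<and> \<not> PE (x,h) v" using x d uv mem by (auto simp: PE_iff)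
      then show ?thesis using mem x by blast
    next
      assume "\<exists>x\<in>VG. x \<noteq> g \<and> x \<noteq> g' \<and> \<not> EG g x \<and> \<not> EG x g'"
      then obtain x where x: "x \<in> VG" "x \<noteq> g" "x \<noteq> g'" "\<not> EG g x" "\<not> EG x g'" by blast
      then have "PE u (x,h') \<and> (x,h') \<noteq> v \<and> \<not> PE (x,h') v" using x d uv mem by (auto simp: PE_iff)
      then show ?thesis using mem x by blast
    qed
  qed
qed

lemma adj_not_MMD: assumes "PE u v" shows "\<not> MMD PV PE u v"
proof -
  have uv: "u \<in> PV" "v \<in> PV" using assms graphP unfolding graph_def by blast+
  from adj_wit[OF assms] show ?thesis
  proof
    assume "\<exists>w\<in>PV. PE u w \<and> w \<noteq> v \<and> \<not> PE w v"
    then obtain w where w: "w \<in> PV" "PE u w" "w \<noteq> v" "\<not> PE w v" by blast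
    have "2 \<le> dist PV PE w v" using dist_ge2[OF w(1) uv(2) w(3,4)] .
    moreover have "dist PV PE u v = 1" using dist_eq1[OF assms] .
    ultimately have "\<not> max_distant PV PE u v" using w unfolding max_distant_def by force
    then show ?thesis unfolding MMD_def by blast
  next
    assume "\<exists>w\<in>PV. PE v w \<and> w \<noteq> u \<and> \<not> PE w u"
    then obtain w where w: "w \<in> PV" "PE v w" "w \<noteq> u" "\<not> PE w u" by blast
    have "2 \<le> dist PV PE w u" using dist_ge2[OF w(1) uv(1) w(3,4)] .
    moreover have "dist PV PE v u = 1" using dist_eq1[OF symP[OF assms]] .
    ultimately have "\<not> max_distant PV PE v u" using w unfolding max_distant_def by force
    then show ?thesis unfolding MMD_def by blast
  qed
qed

lemma adjw:
  assumes "u \<in> PV" "v \<in> PV" "u \<noteq> v" "\<not> PE u v" "sep VH EH (snd v) k" "u \<noteq> (fst v, k)"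
  shows "PE u (fst v, k)"
proof -
  obtain g h g' h' where uv: "u = (g,h)" "v = (g',h')" by (cases u, cases v) auto
  have s: "sep VH EH h' k" using assms uv by simp
  have mem: "g \<in> VG" "h \<in> VH" "g' \<in> VG" "h' \<in> VH" "k \<in> VH" using assms uv s unfolding sep_def by auto
  have sp: "(EH h' h \<or> h = h') \<longleftrightarrow> \<not> (EH k h \<or> h = k)" using sep_part[OF gH s mem(2)] .
  have e1: "EH h' h = EH h h'" "EH k h = EH h k" "EG g' g = EG g g'" using symH symG by blast+
  have n: "\<not> PE (g,h) (g',h')" "(g,h) \<noteq> (g',h')" "(g,h) \<noteq> (g',k)" using assms uv by auto
  show ?thesis using n sp mem unfolding uv e1 by (auto simp: PE_iff e1)
qed

lemma far_not_md:
  assumes "u \<in> PV" "v \<in> PV" "u \<noteq> v" "\<not> PE u v" "sep VH EH (snd v) k" "u \<noteq> (fst v, k)"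
  shows "\<not> max_distant PV PE u v"
proof -
  have a: "PE u (fst v, k)" using adjw[OF assms] .
  have wP: "(fst v, k) \<in> PV" using assms(2,5) unfolding sep_def by auto
  have "grel (fst v, k) v" using sep_sym[OF assms(5)] by (simp add: grel_def)
  then have d3: "dist PV PE (fst v, k) v = 3" using dist_eq3 wP assms(2) by blast
  have "\<not> grel u v"
  proof
    assume "grel u v"
    then have "fst u = fst v" "sep VH EH (snd v) (snd u)" using sep_sym by (auto simp: grel_def)
    moreover then have "snd u = k" using sep_unique[OF gH twH _ assms(5)] by blast
    ultimately show False using assms(6) by (cases u) auto
  qed
  then have "dist PV PE u v \<le> 2" using dist_le2 assms(1,2) by blast
  then show ?thesis using a d3 wP unfolding max_distant_def by force
qed

lemma grel_MMD: assumes "u \<in> PV" "v \<in> PV" "grel u v" shows "MMD PV PE u v"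
proof -
  have g2: "grel v u" using assms(3) sep_sym by (auto simp: grel_def)
  have "dist PV PE u v = 3" "dist PV PE v u = 3" using dist_eq3 assms g2 by blast+
  then have "max_distant PV PE u v" "max_distant PV PE v u"
    unfolding max_distant_def using dw(2) assms(1,2) by auto
  then show ?thesis using assms grel_no(1)[OF assms(3)] unfolding MMD_def by blast
qed

lemma lone_MMD:
  assumes "g \<in> VG" "g' \<in> VG" "g \<noteq> g'" "\<not> EG g g'" "h \<in> VH" "\<not> (\<exists>x. sep VH EH h x)"
  shows "MMD PV PE (g,h) (g',h)"
proof -
  have ng: "\<not> EG g' g" using assms(4) symG by blast
  have np: "\<not> PE (g,h) (g',h)" "\<not> PE (g',h) (g,h)" using assms ng irH by (auto simp: PE_iff)
  have d1: "2 \<le> dist PV PE (g,h) (g',h)" "2 \<le> dist PV PE (g',h) (g,h)"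
    using dist_ge2 np assms by auto
  have le: "dist PV PE w (x,h) \<le> 2" if "w \<in> PV" "x \<in> VG" for w x
  proof -
    have "\<not> grel w (x,h)" using assms(6) sep_sym[of VH EH "snd w" h] by (auto simp: grel_def)
    then show ?thesis using dist_le2 that assms(5) by blast
  qed
  have "max_distant PV PE (g,h) (g',h)" "max_distant PV PE (g',h) (g,h)"
    unfolding max_distant_def using le d1 assms(1,2) graphP unfolding graph_def
    by (meson le_trans)+
  then show ?thesis using assms unfolding MMD_def by auto
qed

lemma MMD_iff:
  assumes "u \<in> PV" "v \<in> PV"
    and one: "\<forall>h\<in>VH. \<forall>h'\<in>VH. (\<not> (\<exists>x. sep VH EH h x)) \<longrightarrow> (\<not> (\<exists>x. sep VH EH h' x)) \<longrightarrow> h = h'"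
  shows "MMD PV PE u v \<longleftrightarrow> grel u v \<or>
     (snd u = snd v \<and> \<not> (\<exists>x. sep VH EH (snd u) x) \<and> compl_edges VG EG (fst u) (fst v))"
proof
  assume m: "MMD PV PE u v"
  then have ne: "u \<noteq> v" and md: "max_distant PV PE u v" "max_distant PV PE v u" unfolding MMD_def by auto
  have np: "\<not> PE u v" using adj_not_MMD m by blast
  have np2: "\<not> PE v u" using np symP by blast
  show "grel u v \<or> (snd u = snd v \<and> \<not> (\<exists>x. sep VH EH (snd u) x) \<and> compl_edges VG EG (fst u) (fst v))"
  proof (cases "\<exists>k. sep VH EH (snd v) k")
    case True
    then obtain k where k: "sep VH EH (snd v) k" by blast
    have "u = (fst v, k)" using far_not_md[OF assms(1,2) ne np k] md(1) by blast
    then have "grel u v" using sep_sym[OF k] by (simp add: grel_def)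
    then show ?thesis by blast
  next
    case nv: False
    show ?thesis
    proof (cases "\<exists>k. sep VH EH (snd u) k")
      case True
      then obtain k where k: "sep VH EH (snd u) k" by blast
      have "v = (fst u, k)" using far_not_md[OF assms(2,1) ne[symmetric] np2 k] md(2) by blast
      then have "grel u v" using k by (simp add: grel_def)
      then show ?thesis by blast
    next
      case False
      have mu: "snd u \<in> VH" "snd v \<in> VH" using assms by auto
      have eq: "snd u = snd v" using one mu nv False by blast
      have f1: "fst u \<noteq> fst v" using ne eq prod_eq_iff by blast
      obtain g h g' where uv: "u = (g,h)" "v = (g',h)" using eq by (cases u, cases v) auto
      have "\<not> EG g g'" using np uv assms by (auto simp: PE_iff)
      then have "compl_edges VG EG (fst u) (fst v)" using f1 uv assms unfolding compl_edges_def by auto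
      then show ?thesis using False eq by blast
    qed
  qed
next
  assume "grel u v \<or> (snd u = snd v \<and> \<not> (\<exists>x. sep VH EH (snd u) x) \<and> compl_edges VG EG (fst u) (fst v))"
  then show "MMD PV PE u v"
  proof
    assume "grel u v" then show ?thesis using grel_MMD assms by blast
  next
    assume a: "snd u = snd v \<and> \<not> (\<exists>x. sep VH EH (snd u) x) \<and> compl_edges VG EG (fst u) (fst v)"
    obtain g h g' where uv: "u = (g,h)" "v = (g',h)" using a by (cases u, cases v) auto
    show ?thesis using lone_MMD[of g g' h] a assms unfolding uv compl_edges_def by simp
  qed
qed


end

lemma inv_match:
  assumes fin: "finite S" and inv: "\<forall>x\<in>S. p x \<in> S \<and> p x \<noteq> x \<and> p (p x) = x"
  shows "\<exists>f. bij_betw f S (kK2_verts (card S div 2)) \<and>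
    (\<forall>x\<in>S. \<forall>y\<in>S. kK2_edges (card S div 2) (f x) (f y) \<longleftrightarrow> y = p x)"
proof -
  define c where "c x = (SOME z. z \<in> {x, p x})" for x
  have c_in: "c x \<in> {x, p x}" for x unfolding c_def by (rule someI[of _ x]) simp
  have c_p: "c (p x) = c x" if "x \<in> S" for x
  proof -
    have "{p x, p (p x)} = {x, p x}" using inv that by auto
    then show ?thesis unfolding c_def by simp
  qed
  define R where "R = {x\<in>S. c x = x}"
  have R_iff: "x \<in> R \<longleftrightarrow> p x \<notin> R" if "x \<in> S" for x
  proof -
    have px: "p x \<in> S" "p x \<noteq> x" "p (p x) = x" using inv that by auto
    show ?thesis
    proof (cases "c x = x")
      case True
      then have "c (p x) \<noteq> p x" using c_p[OF that] px by auto
      then show ?thesis using True that unfolding R_def by auto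
    next
      case False
      then have "c x = p x" using c_in[of x] by auto
      then have "c (p x) = p x" using c_p[OF that] by auto
      then show ?thesis using False px unfolding R_def by auto
    qed
  qed
  have RS: "R \<subseteq> S" unfolding R_def by auto
  have finR: "finite R" using fin RS finite_subset by blast
  define rho where "rho x = (if x \<in> R then x else p x)" for x
  have rho_R: "x \<in> S \<Longrightarrow> rho x \<in> R" for x using R_iff unfolding rho_def by auto
  obtain r where r: "bij_betw r R {0..<card R}" using ex_bij_betw_finite_nat[OF finR] by blast
  have inj_r: "inj_on r R" and rR: "r ` R = {..<card R}" using r unfolding bij_betw_def by auto
  define k where "k = card R"
  have Sdecomp: "S = R \<union> p ` R"
  proof
    show "S \<subseteq> R \<union> p ` R"
    proof
      fix x assume x: "x \<in> S"
      show "x \<in> R \<union> p ` R"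
      proof (cases "x \<in> R")
        case True then show ?thesis by simp
      next
        case False
        then have "p x \<in> R" using R_iff x by simp
        moreover have "x = p (p x)" using inv x by simp
        ultimately show ?thesis by blast
      qed
    qed
    show "R \<union> p ` R \<subseteq> S" using RS inv by auto
  qed
  have disj: "R \<inter> p ` R = {}" using R_iff RS by auto
  have injp: "inj_on p R"
  proof (rule inj_onI)
    fix x y assume xy: "x \<in> R" "y \<in> R" "p x = p y"
    have "x = p (p x)" "y = p (p y)" using inv RS xy(1,2) by auto
    then show "x = y" using xy(3) by simp
  qed
  have cardS: "card S = 2 * k"
  proof -
    have "card S = card R + card (p ` R)"
      using card_Un_disjoint[OF finR finite_imageI[OF finR] disj] Sdecomp by simp
    also have "card (p ` R) = card R" using injp card_image by blast
    finally show ?thesis unfolding k_def by simp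
  qed
  then have kd: "card S div 2 = k" by simp
  define f where "f x = (r (rho x), x \<in> R)" for x
  have f_in: "f x \<in> kK2_verts k" if "x \<in> S" for x
    using rho_R[OF that] rR unfolding f_def kK2_verts_def k_def by auto
  have inj_f: "inj_on f S"
  proof (rule inj_onI)
    fix x y assume xy: "x \<in> S" "y \<in> S" "f x = f y"
    then have "rho x = rho y" using inj_r rho_R unfolding f_def inj_on_def by auto
    moreover have "(x \<in> R) = (y \<in> R)" using xy unfolding f_def by auto
    ultimately show "x = y"
    proof (cases "x \<in> R")
      case True
      then show ?thesis using \<open>rho x = rho y\<close> \<open>(x \<in> R) = (y \<in> R)\<close> unfolding rho_def by simp
    next
      case False
      then have "p x = p y" using \<open>rho x = rho y\<close> \<open>(x \<in> R) = (y \<in> R)\<close> unfolding rho_def by simp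
      moreover have "x = p (p x)" "y = p (p y)" using inv xy(1,2) by auto
      ultimately show ?thesis by metis
    qed
  qed
  have "f ` S = kK2_verts k"
  proof (rule card_subset_eq)
    show "finite (kK2_verts k)" unfolding kK2_verts_def by simp
    show "f ` S \<subseteq> kK2_verts k" using f_in by auto
    have "card (kK2_verts k) = k * 2" unfolding kK2_verts_def by (simp add: card_cartesian_product)
    then show "card (f ` S) = card (kK2_verts k)" using card_image[OF inj_f] cardS by simp
  qed
  then have bij: "bij_betw f S (kK2_verts (card S div 2))" using inj_f kd unfolding bij_betw_def by simp
  have edges: "kK2_edges (card S div 2) (f x) (f y) \<longleftrightarrow> y = p x" if xy: "x \<in> S" "y \<in> S" for x y
  proof -
    have lt: "r (rho x) < k" using rho_R[OF xy(1)] rR unfolding k_def by auto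
    have "kK2_edges (card S div 2) (f x) (f y) \<longleftrightarrow> rho x = rho y \<and> (x \<in> R) \<noteq> (y \<in> R)"
      using lt kd inj_r rho_R xy unfolding kK2_edges_def f_def inj_on_def by auto
    also have "\<dots> \<longleftrightarrow> y = p x"
    proof
      assume a: "rho x = rho y \<and> (x \<in> R) \<noteq> (y \<in> R)"
      show "y = p x"
      proof (cases "x \<in> R")
        case True
        then have "y \<notin> R" "rho y = x" using a unfolding rho_def by auto
        then have "p y = x" unfolding rho_def by simp
        moreover have "y = p (p y)" using inv xy(2) by auto
        ultimately show ?thesis by simp
      next
        case False
        then have "y \<in> R" "rho x = p x" using a unfolding rho_def by auto
        then show ?thesis using a unfolding rho_def by simp
      qed
    next
      assume y: "y = p x"
      have px: "p (p x) = x" using inv xy(1) by auto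
      show "rho x = rho y \<and> (x \<in> R) \<noteq> (y \<in> R)"
      proof (cases "x \<in> R")
        case True
        then have "p x \<notin> R" using R_iff xy(1) by simp
        then show ?thesis using True y px unfolding rho_def by simp
      next
        case False
        then have "p x \<in> R" using R_iff xy(1) by simp
        then show ?thesis using False y px unfolding rho_def by simp
      qed
    qed
    finally show ?thesis .
  qed
  show ?thesis using bij edges by blast
qed

theorem mainTheorem19:
  fixes VG :: "'a set" and EG :: "'a \<Rightarrow> 'a \<Rightarrow> bool"
    and VH :: "'b set" and EH :: "'b \<Rightarrow> 'b \<Rightarrow> bool"
  assumes "graph VG EG" and "graph VH EH"
    and "connected VG EG" and "connected VH EH"
    and "card VG \<ge> 2" and "card VH \<ge> 2"
    and "\<not> complete_graph VG EG" and "\<not> complete_graph VH EH"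
    and "diam (VG \<times> VH) (modprod_edges VG EG VH EH) = 3"
    and "\<not> (\<exists>u w. adjacent_twins VG EG u w)"
    and "\<not> (\<exists>u w. adjacent_twins VH EH u w)"
    and "\<not> (\<exists>x. universal_vertex VG EG x)"
    and "\<not> (\<exists>u w. gamma_pair VG EG u w)"
    and "\<exists>u w. gamma_pair VH EH u w"
  shows "((\<exists>h. VH - PP VH EH = {h}) \<longrightarrow>
           graph_iso
             (SR_verts (VG \<times> VH) (modprod_edges VG EG VH EH))
             (SR_edges (VG \<times> VH) (modprod_edges VG EG VH EH))
             (du_verts VG (kK2_verts (card VG * (card VH - 1) div 2)))
             (du_edges (compl_edges VG EG) (kK2_edges (card VG * (card VH - 1) div 2))))
       \<and> (VH = PP VH EH \<longrightarrow>
           graph_iso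
             (SR_verts (VG \<times> VH) (modprod_edges VG EG VH EH))
             (SR_edges (VG \<times> VH) (modprod_edges VG EG VH EH))
             (kK2_verts (card VG * card VH div 2))
             (kK2_edges (card VG * card VH div 2)))"
proof -
  have uH: "\<not> (\<exists>x. universal_vertex VH EH x)"
  proof
    assume "\<exists>x. universal_vertex VH EH x"
    then obtain x where x: "universal_vertex VH EH x" by blast
    obtain a b where ab: "gamma_pair VH EH a b" using assms(14) by blast
    have "a \<noteq> b" using ab unfolding gamma_pair_def cnbhd_def by auto
    then have c2: "card {a,b} = 2" by simp
    have "cnbhd VH EH x = VH" using x unfolding universal_vertex_def cnbhd_def by auto
    then have "dominating VH EH {x}" using x unfolding dominating_def universal_vertex_def by auto
    then have "card {a,b} \<le> card {x}" using ab unfolding gamma_pair_def min_dominating_def by blast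
    then show False using c2 by simp
  qed
  have sG: "\<not> (\<exists>a b. sep VG EG a b)" using assms(13) gamma_pair_sep[OF assms(1) assms(12)] by blast
  interpret M: mp VG EG VH EH
    by (rule mp.intro) (use assms uH sG in auto)
  define q where "q h = (SOME k. sep VH EH h k)" for h
  have q: "sep VH EH h (q h)" if "\<exists>k. sep VH EH h k" for h
    using someI_ex[OF that] unfolding q_def .
  have q_uni: "k = q h" if "sep VH EH h k" for h k
  proof -
    have "\<exists>k. sep VH EH h k" using that by blast
    then show ?thesis using sep_unique[OF assms(2) assms(11) that q] by blast
  qed
  have PPe: "PP VH EH = {h. \<exists>k. sep VH EH h k}"
    unfolding PP_def gamma_pair_sep[OF assms(2) uH] using sep_sym[of VH EH] by blast
  define Q where "Q x = (fst x, q (snd x))" for x :: "'a \<times> 'b"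
  have grel_iff: "M.grel u v \<longleftrightarrow> (\<exists>k. sep VH EH (snd u) k) \<and> v = Q u" for u v
  proof
    assume "M.grel u v"
    then have "fst u = fst v" "sep VH EH (snd u) (snd v)" unfolding M.grel_def by auto
    then show "(\<exists>k. sep VH EH (snd u) k) \<and> v = Q u" using q_uni unfolding Q_def
      by (cases v) auto
  next
    assume "(\<exists>k. sep VH EH (snd u) k) \<and> v = Q u"
    then show "M.grel u v" using q unfolding M.grel_def Q_def by auto
  qed
  have Qprop: "Q x \<in> VG \<times> VH \<and> Q x \<noteq> x \<and> Q (Q x) = x \<and> (\<exists>k. sep VH EH (snd (Q x)) k)"
    if "x \<in> VG \<times> VH" "\<exists>k. sep VH EH (snd x) k" for x
  proof -
    have s: "sep VH EH (snd x) (q (snd x))" using q that(2) by blast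
    have s2: "sep VH EH (q (snd x)) (snd x)" using sep_sym[OF s] .
    have "q (q (snd x)) = snd x" using q_uni[OF s2] by simp
    then show ?thesis using s s2 that unfolding Q_def sep_def by (cases x) auto
  qed
  have finG: "finite VG" and finH: "finite VH" using assms(1,2) unfolding graph_def by auto
  show ?thesis
  proof (intro conjI impI)
    assume "\<exists>h. VH - PP VH EH = {h}"
    then obtain h0 where h0e: "VH - PP VH EH = {h0}" by blast
    have h0: "h0 \<in> VH" "\<not> (\<exists>k. sep VH EH h0 k)" using h0e PPe by auto
    have oth: "\<exists>k. sep VH EH h k" if "h \<in> VH" "h \<noteq> h0" for h
      using that h0e PPe by auto
    have one: "\<forall>h\<in>VH. \<forall>h'\<in>VH. (\<not> (\<exists>x. sep VH EH h x)) \<longrightarrow> (\<not> (\<exists>x. sep VH EH h' x)) \<longrightarrow> h = h'"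
      using oth by blast
    define S where "S = VG \<times> (VH - {h0})"
    have finS: "finite S" unfolding S_def using finG finH by simp
    have Sinv: "\<forall>x\<in>S. Q x \<in> S \<and> Q x \<noteq> x \<and> Q (Q x) = x"
    proof
      fix x assume x: "x \<in> S"
      have xP1: "x \<in> VG \<times> VH" "snd x \<noteq> h0" using x unfolding S_def by auto
      have xP: "x \<in> VG \<times> VH" "\<exists>k. sep VH EH (snd x) k" using xP1 oth[of "snd x"] by auto
      from Qprop[OF xP] have "Q x \<in> VG \<times> VH" "Q x \<noteq> x" "Q (Q x) = x" "\<exists>k. sep VH EH (snd (Q x)) k"
        by auto
      moreover then have "snd (Q x) \<noteq> h0" using h0 by auto
      ultimately show "Q x \<in> S \<and> Q x \<noteq> x \<and> Q (Q x) = x" unfolding S_def by (cases "Q x") auto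
    qed
    obtain f where f: "bij_betw f S (kK2_verts (card S div 2))"
      and fe: "\<forall>x\<in>S. \<forall>y\<in>S. kK2_edges (card S div 2) (f x) (f y) \<longleftrightarrow> y = Q x"
      using inv_match[OF finS Sinv] by blast
    have cS: "card S div 2 = card VG * (card VH - 1) div 2"
      unfolding S_def using finG finH h0(1) by (simp add: card_cartesian_product)
    define k where "k = card VG * (card VH - 1) div 2"
    have f': "bij_betw f S (kK2_verts k)" "\<forall>x\<in>S. \<forall>y\<in>S. kK2_edges k (f x) (f y) \<longleftrightarrow> y = Q x"
      using f fe cS unfolding k_def by auto
    have SRv: "SR_verts (VG \<times> VH) (modprod_edges VG EG VH EH) = VG \<times> VH"
    proof -
      have "\<exists>y. MMD (VG \<times> VH) (modprod_edges VG EG VH EH) x y" if x: "x \<in> VG \<times> VH" for x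
      proof (cases "snd x = h0")
        case True
        obtain g' where g': "g' \<in> VG" "g' \<noteq> fst x" "\<not> EG (fst x) g'" using M.nonuniv_G[of "fst x"] x by auto
        have "MMD (VG \<times> VH) (modprod_edges VG EG VH EH) (fst x, h0) (g', h0)"
          using M.lone_MMD[of "fst x" g' h0] g' x h0 by auto
        then show ?thesis using True by (cases x) auto
      next
        case False
        then have e: "\<exists>k. sep VH EH (snd x) k" using oth x by auto
        have g: "M.grel x (Q x)" using grel_iff e by blast
        have qx: "Q x \<in> VG \<times> VH" using Qprop[OF x e] by blast
        show ?thesis using M.grel_MMD[OF x qx g] by blast
      qed
      then show ?thesis unfolding SR_verts_def by auto
    qed
    define F where "F x = (if snd x = h0 then Inl (fst x) else Inr (f x))" for x
    have inS: "x \<in> S" if "x \<in> VG \<times> VH" "snd x \<noteq> h0" for x using that unfolding S_def by auto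
    have injf: "inj_on f S" and imf: "f ` S = kK2_verts k" using f' unfolding bij_betw_def by auto
    have bijF: "bij_betw F (VG \<times> VH) (du_verts VG (kK2_verts k))"
      unfolding bij_betw_def
    proof
      show "inj_on F (VG \<times> VH)"
      proof (rule inj_onI)
        fix x y assume xy: "x \<in> VG \<times> VH" "y \<in> VG \<times> VH" "F x = F y"
        show "x = y"
        proof (cases "snd x = h0"; cases "snd y = h0")
          assume "snd x = h0" "snd y = h0"
          then show ?thesis using xy(3) unfolding F_def by (simp add: prod_eq_iff)
        next
          assume "snd x = h0" "snd y \<noteq> h0" then show ?thesis using xy(3) unfolding F_def by simp
        next
          assume "snd x \<noteq> h0" "snd y = h0" then show ?thesis using xy(3) unfolding F_def by simp
        next
          assume a: "snd x \<noteq> h0" "snd y \<noteq> h0"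
          then have "f x = f y" using xy(3) unfolding F_def by simp
          then show ?thesis using injf inS a xy unfolding inj_on_def by blast
        qed
      qed
      show "F ` (VG \<times> VH) = du_verts VG (kK2_verts k)"
      proof
        show "F ` (VG \<times> VH) \<subseteq> du_verts VG (kK2_verts k)"
        proof
          fix z assume "z \<in> F ` (VG \<times> VH)"
          then obtain x where x: "x \<in> VG \<times> VH" "z = F x" by blast
          show "z \<in> du_verts VG (kK2_verts k)"
          proof (cases "snd x = h0")
            case True
            then have "z = Inl (fst x)" "fst x \<in> VG" using x unfolding F_def by auto
            then show ?thesis unfolding du_verts_def by simp
          next
            case False
            then have "x \<in> S" using inS x by blast
            then have "f x \<in> f ` S" by (rule imageI)
            then have "f x \<in> kK2_verts k" using imf by simp
            moreover have "z = Inr (f x)" using x False unfolding F_def by simp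
            ultimately show ?thesis unfolding du_verts_def by simp
          qed
        qed
        show "du_verts VG (kK2_verts k) \<subseteq> F ` (VG \<times> VH)"
        proof
          fix z assume "z \<in> du_verts VG (kK2_verts k)"
          then have "z \<in> Inl ` VG \<or> z \<in> Inr ` kK2_verts k" unfolding du_verts_def by simp
          then show "z \<in> F ` (VG \<times> VH)"
          proof
            assume "z \<in> Inl ` VG"
            then obtain g where g: "g \<in> VG" "z = Inl g" by blast
            then have "z = F (g, h0)" "(g, h0) \<in> VG \<times> VH" unfolding F_def using h0 by auto
            then show ?thesis by (rule image_eqI)
          next
            assume "z \<in> Inr ` kK2_verts k"
            then obtain w where w: "w \<in> kK2_verts k" "z = Inr w" by blast
            have "w \<in> f ` S" using w(1) imf by simp
            then obtain x where x: "x \<in> S" "f x = w" by (metis imageE)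
            then have xx: "x \<in> VG \<times> VH" "snd x \<noteq> h0" unfolding S_def by auto
            then have "z = F x" unfolding F_def using x w by simp
            then show ?thesis using xx(1) by (rule image_eqI)
          qed
        qed
      qed
    qed
    have edgesF: "SR_edges (VG \<times> VH) (modprod_edges VG EG VH EH) x y \<longleftrightarrow>
        du_edges (compl_edges VG EG) (kK2_edges k) (F x) (F y)"
      if xy: "x \<in> VG \<times> VH" "y \<in> VG \<times> VH" for x y
    proof -
      have m: "SR_edges (VG \<times> VH) (modprod_edges VG EG VH EH) x y \<longleftrightarrow> M.grel x y \<or>
        (snd x = snd y \<and> \<not> (\<exists>k. sep VH EH (snd x) k) \<and> compl_edges VG EG (fst x) (fst y))"
        unfolding SR_edges_def using M.MMD_iff[OF xy one] .
      show ?thesis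
      proof (cases "snd x = h0"; cases "snd y = h0")
        assume a: "snd x = h0" "snd y = h0"
        have "\<not> M.grel x y" using a h0 unfolding M.grel_def by auto
        then show ?thesis using m a h0 unfolding F_def by auto
      next
        assume a: "snd x = h0" "snd y \<noteq> h0"
        have "\<not> M.grel x y" using a h0 unfolding M.grel_def by auto
        then show ?thesis using m a h0 unfolding F_def by auto
      next
        assume a: "snd x \<noteq> h0" "snd y = h0"
        have "\<not> M.grel x y" using a h0(2) sep_sym[of VH EH "snd x" "snd y"] unfolding M.grel_def by auto
        then show ?thesis using m a h0 unfolding F_def by auto
      next
        assume a: "snd x \<noteq> h0" "snd y \<noteq> h0"
        have e: "\<exists>k. sep VH EH (snd x) k" using oth a xy by auto
        have "SR_edges (VG \<times> VH) (modprod_edges VG EG VH EH) x y \<longleftrightarrow> y = Q x"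
          using m grel_iff e by auto
        also have "\<dots> \<longleftrightarrow> kK2_edges k (f x) (f y)" using f'(2) inS xy a by auto
        finally show ?thesis using a unfolding F_def by simp
      qed
    qed
    show "graph_iso
             (SR_verts (VG \<times> VH) (modprod_edges VG EG VH EH))
             (SR_edges (VG \<times> VH) (modprod_edges VG EG VH EH))
             (du_verts VG (kK2_verts (card VG * (card VH - 1) div 2)))
             (du_edges (compl_edges VG EG) (kK2_edges (card VG * (card VH - 1) div 2)))"
      unfolding graph_iso_def SRv k_def[symmetric] by (intro exI[of _ F] conjI bijF ballI edgesF)
  next
    assume allP: "VH = PP VH EH"
    have all: "\<exists>k. sep VH EH h k" if "h \<in> VH" for h using that allP PPe by auto
    have one: "\<forall>h\<in>VH. \<forall>h'\<in>VH. (\<not> (\<exists>x. sep VH EH h x)) \<longrightarrow> (\<not> (\<exists>x. sep VH EH h' x)) \<longrightarrow> h = h'"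
      using all by blast
    have finS: "finite (VG \<times> VH)" using finG finH by simp
    have Sinv: "\<forall>x\<in>VG \<times> VH. Q x \<in> VG \<times> VH \<and> Q x \<noteq> x \<and> Q (Q x) = x"
      using Qprop all by auto
    obtain f where f: "bij_betw f (VG \<times> VH) (kK2_verts (card (VG \<times> VH) div 2))"
      and fe: "\<forall>x\<in>VG \<times> VH. \<forall>y\<in>VG \<times> VH. kK2_edges (card (VG \<times> VH) div 2) (f x) (f y) \<longleftrightarrow> y = Q x"
      using inv_match[OF finS Sinv] by blast
    have cS: "card (VG \<times> VH) = card VG * card VH" by (simp add: card_cartesian_product)
    have SRv: "SR_verts (VG \<times> VH) (modprod_edges VG EG VH EH) = VG \<times> VH"
    proof -
      have "\<exists>y. MMD (VG \<times> VH) (modprod_edges VG EG VH EH) x y" if x: "x \<in> VG \<times> VH" for x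
      proof -
        have e: "\<exists>k. sep VH EH (snd x) k" using all x by auto
        have g: "M.grel x (Q x)" using grel_iff e by blast
        have qx: "Q x \<in> VG \<times> VH" using Qprop[OF x e] by blast
        show ?thesis using M.grel_MMD[OF x qx g] by blast
      qed
      then show ?thesis unfolding SR_verts_def by auto
    qed
    have edges: "SR_edges (VG \<times> VH) (modprod_edges VG EG VH EH) x y \<longleftrightarrow>
        kK2_edges (card VG * card VH div 2) (f x) (f y)"
      if xy: "x \<in> VG \<times> VH" "y \<in> VG \<times> VH" for x y
    proof -
      have e: "\<exists>k. sep VH EH (snd x) k" using all xy by auto
      have "SR_edges (VG \<times> VH) (modprod_edges VG EG VH EH) x y \<longleftrightarrow> M.grel x y"
        unfolding SR_edges_def using M.MMD_iff[OF xy one] e by auto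
      also have "\<dots> \<longleftrightarrow> y = Q x" using grel_iff e by auto
      also have "\<dots> \<longleftrightarrow> kK2_edges (card VG * card VH div 2) (f x) (f y)" using fe xy cS by auto
      finally show ?thesis .
    qed
    show "graph_iso
             (SR_verts (VG \<times> VH) (modprod_edges VG EG VH EH))
             (SR_edges (VG \<times> VH) (modprod_edges VG EG VH EH))
             (kK2_verts (card VG * card VH div 2))
             (kK2_edges (card VG * card VH div 2))"
      unfolding graph_iso_def SRv by (intro exI[of _ f] conjI ballI edges) (use f cS in simp)
  qed
qed

end
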